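(* For all positive integers $m,n$ and any $(A,\boldsymbol{\gamma})\in[0,1)^{m\times n}\times[0,1)^m$, we have $\mathcal{C}(A,\boldsymbol{\gamma})\neq\emptyset$ if and only if $(A,\boldsymbol{\gamma})\notin\mathbf{Bad}(m,n)$.
   Context: $[0,1)^{m\times n}$ is the set of real $m\times n$ matrices with entries in $[0,1)$. For $\boldsymbol{x}\in\mathbb{R}^n$, $\|\boldsymbol{x}\|=\max_i|x_i|$; for $\boldsymbol{y}\in\mathbb{R}^m$, $\langle\boldsymbol{y}\rangle=\min_{\boldsymbol{p}\in\mathbb{Z}^m}\|\boldsymbol{y}-\boldsymbol{p}\|$. "Decreasing" means non-increasing. $\mathcal{C}$ is the set of decreasing $\psi:\mathbb{N}\to[0,\infty)$ with $\sum_{q\ge1}q^{n-1}\psi(q)^m<\infty$. $\mathcal{C}(A,\boldsymbol{\gamma})=\{\psi\in\mathcal{C}:\langle A\boldsymbol{q}-\boldsymbol{\gamma}\rangle<\psi(\|\boldsymbol{q}\|)\text{ for infinitely many }\boldsymbol{q}\in\mathbb{Z}^n\}$. $\mathbf{Bad}(m,n)=\{(A,\boldsymbol{\gamma}):\liminf_{\boldsymbol{q}\in\mathbb{Z}^n,\|\boldsymbol{q}\|\to\infty}\|\boldsymbol{q}\|^n\langle A\boldsymbol{q}-\boldsymbol{\gamma}\rangle^m>0\}$. *)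

theory Defs
  imports "HOL-Analysis.Analysis" "HOL-Library.Liminf_Limsup"
begin

definition supnorm_int :: "int ^ 'n::finite \<Rightarrow> nat" where
  "supnorm_int q = nat (Max (range (\<lambda>i. \<bar>q $ i\<bar>)))"

definition supnorm_real :: "real ^ 'm::finite \<Rightarrow> real" where
  "supnorm_real y = Max (range (\<lambda>i. \<bar>y $ i\<bar>))"

definition dist_Zm :: "real ^ 'm::finite \<Rightarrow> real" where
  "dist_Zm y = (INF p :: int ^ 'm. supnorm_real (y - (\<chi> i. real_of_int (p $ i))))"

definition matvec_int :: "real ^ 'n ^ 'm \<Rightarrow> int ^ 'n::finite \<Rightarrow> real ^ 'm::finite" where
  "matvec_int A q = A *v (\<chi> j. real_of_int (q $ j))"

definition C_class :: "nat \<Rightarrow> nat \<Rightarrow> (nat \<Rightarrow> real) set" where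
  "C_class m n = {\<psi>. (\<forall>a b. a \<le> b \<longrightarrow> \<psi> b \<le> \<psi> a) \<and> (\<forall>q. 0 \<le> \<psi> q) \<and>
      summable (\<lambda>k. real (Suc k) ^ (n - 1) * \<psi> (Suc k) ^ m)}"

definition C_A :: "real ^ 'n ^ 'm \<Rightarrow> real ^ 'm \<Rightarrow> (nat \<Rightarrow> real) set" where
  "C_A A \<gamma> = {\<psi> \<in> C_class CARD('m::finite) CARD('n::finite).
      infinite {q :: int ^ 'n. dist_Zm (matvec_int A q - \<gamma>) < \<psi> (supnorm_int q)}}"

definition Bad :: "((real ^ 'n::finite ^ 'm::finite) \<times> (real ^ 'm)) set" where
  "Bad = {(A :: real ^ 'n ^ 'm, \<gamma> :: real ^ 'm). Liminf (INF N::nat. principal {q :: int ^ 'n. N \<le> supnorm_int q})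
        (\<lambda>q. ereal (real (supnorm_int q) ^ CARD('n) * dist_Zm (matvec_int A q - \<gamma>) ^ CARD('m)))
        > 0}"

end

theory Submission
  imports Defs
begin

lemma supnorm_real_nonneg: "0 \<le> supnorm_real y"
proof -
  obtain i :: 'a where True by simp
  have "\<bar>y $ i\<bar> \<le> supnorm_real y" unfolding supnorm_real_def
    by (rule Max_ge) auto
  then show ?thesis by linarith
qed

lemma dist_Zm_nonneg: "0 \<le> dist_Zm y"
  unfolding dist_Zm_def by (rule cINF_greatest) (auto simp: supnorm_real_nonneg)

lemma supnorm_int_ge: "\<bar>q $ i\<bar> \<le> int (supnorm_int q)"
proof -
  have "\<bar>q $ i\<bar> \<le> Max (range (\<lambda>i. \<bar>q $ i\<bar>))" by (rule Max_ge) auto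
  then show ?thesis unfolding supnorm_int_def by linarith
qed

lemma finite_supnorm_le: "finite {q :: int ^ 'n::finite. supnorm_int q \<le> N}"
proof -
  have "{q :: int ^ 'n. supnorm_int q \<le> N} \<subseteq> vec_lambda ` (PiE UNIV (\<lambda>_. {- int N..int N}))"
  proof
    fix q :: "int ^ 'n" assume "q \<in> {q. supnorm_int q \<le> N}"
    then have "\<forall>i. \<bar>q $ i\<bar> \<le> int N" using supnorm_int_ge[of q] by (meson mem_Collect_eq of_nat_le_iff order_trans)
    then have "vec_nth q \<in> PiE UNIV (\<lambda>_. {- int N..int N})" by (auto simp: PiE_UNIV_domain abs_le_iff) (metis minus_le_iff)
    then show "q \<in> vec_lambda ` (PiE UNIV (\<lambda>_. {- int N..int N}))"
      by (metis image_eqI vec_nth_inverse)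
  qed
  moreover have "finite (PiE (UNIV::'n set) (\<lambda>_. {- int N..int N}))" by (rule finite_PiE) auto
  ultimately show ?thesis by (meson finite_imageI finite_subset)
qed

lemma eventually_F:
  "eventually P (INF N::nat. principal {q :: int ^ 'n::finite. N \<le> supnorm_int q}) \<longleftrightarrow>
   (\<exists>N. \<forall>q. N \<le> supnorm_int q \<longrightarrow> P q)"
proof -
  have "eventually P (INF N::nat\<in>UNIV. principal {q :: int ^ 'n::finite. N \<le> supnorm_int q}) \<longleftrightarrow>
     (\<exists>N\<in>UNIV. eventually P (principal {q :: int ^ 'n::finite. N \<le> supnorm_int q}))"
  proof (rule eventually_INF_base)
    fix a b :: nat
    show "\<exists>x\<in>UNIV. principal {q :: int ^ 'n::finite. x \<le> supnorm_int q} \<le>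
      inf (principal {q. a \<le> supnorm_int q}) (principal {q. b \<le> supnorm_int q})"
      by (rule bexI[of _ "max a b"]) (auto simp: inf_principal)
  qed auto
  then show ?thesis by (auto simp: eventually_principal)
qed

lemma tail_small:
  fixes \<psi> :: "nat \<Rightarrow> real"
  assumes dec: "\<forall>a b. a \<le> b \<longrightarrow> \<psi> b \<le> \<psi> a" and nn: "\<forall>q. 0 \<le> \<psi> q"
    and sm: "summable (\<lambda>k. real (Suc k) ^ (n - 1) * \<psi> (Suc k) ^ m)"
    and n: "n \<ge> 1" and e: "e > 0"
  shows "\<exists>T. \<forall>t\<ge>T. real t ^ n * \<psi> t ^ m < e"
proof -
  define a where "a k = real (Suc k) ^ (n - 1) * \<psi> (Suc k) ^ m" for k
  have "e / 3 ^ n > 0" using e by simp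
  then obtain N where N: "\<And>s r. s \<ge> N \<Longrightarrow> norm (sum a {s..<r}) < e / 3 ^ n"
    using sm unfolding summable_Cauchy a_def by blast
  show ?thesis
  proof (intro exI allI impI)
    fix t assume t: "2 * N + 2 \<le> t"
    define s where "s = t div 2"
    have s1: "s \<ge> 1" "s \<ge> N" "2 * s \<le> t" "t \<le> 3 * s" using t unfolding s_def by auto
    have B: "real s ^ n * \<psi> t ^ m / real s \<le> a i" if i: "i \<in> {s ..< 2 * s}" for i
    proof -
      have "real s ^ n / real s = real s ^ (n - 1)" using s1 n
        by (metis One_nat_def Suc_pred less_le_trans not_one_le_zero of_nat_0_less_iff power_Suc2 zero_less_one
            nonzero_mult_div_cancel_right of_nat_0_le_iff linorder_not_le order.strict_iff_not)
      moreover have "real s ^ (n - 1) \<le> real (Suc i) ^ (n - 1)" using i by (intro power_mono) auto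
      moreover have "\<psi> t ^ m \<le> \<psi> (Suc i) ^ m" using i s1 dec nn by (intro power_mono) auto
      ultimately show "real s ^ n * \<psi> t ^ m / real s \<le> a i" unfolding a_def
        by (metis (no_types, lifting) mult_mono nn times_divide_eq_left zero_le_power of_nat_0_le_iff mult.commute)
    qed
    have "real (card {s ..< 2 * s}) * (real s ^ n * \<psi> t ^ m / real s) \<le> sum a {s ..< 2 * s}"
      using B by (rule sum_bounded_below)
    then have "real s ^ n * \<psi> t ^ m \<le> sum a {s ..< 2 * s}" using s1 by auto
    also have "\<dots> < e / 3 ^ n" using N[OF s1(2), of "2 * s"] by simp
    finally have A: "real s ^ n * \<psi> t ^ m < e / 3 ^ n" .
    have "real t ^ n * \<psi> t ^ m \<le> (3 * real s) ^ n * \<psi> t ^ m"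
      using s1 nn by (intro mult_right_mono power_mono) auto
    also have "\<dots> = 3 ^ n * (real s ^ n * \<psi> t ^ m)" by (simp add: power_mult_distrib)
    also have "\<dots> < 3 ^ n * (e / 3 ^ n)" using A by (intro mult_strict_left_mono) auto
    also have "\<dots> = e" by simp
    finally show "real t ^ n * \<psi> t ^ m < e" .
  qed
qed

theorem corollary1p3:
  fixes A :: "real ^ 'n::finite ^ 'm::finite" and \<gamma> :: "real ^ 'm"
  assumes "\<forall>i j. A $ i $ j \<in> {0..<1}"
    and "\<forall>i. \<gamma> $ i \<in> {0..<1}"
  shows "C_A A \<gamma> \<noteq> {} \<longleftrightarrow> (A, \<gamma>) \<notin> Bad"
proof -
  define n where "n = CARD('n)"
  define m where "m = CARD('m)"
  have n1: "n \<ge> 1" and m1: "m \<ge> 1" unfolding n_def m_def by (auto simp: Suc_le_eq)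
  define d where "d q = dist_Zm (matvec_int A q - \<gamma>)" for q :: "int ^ 'n"
  define f where "f q = real (supnorm_int q) ^ n * d q ^ m" for q :: "int ^ 'n"
  have d0: "0 \<le> d q" for q unfolding d_def by (rule dist_Zm_nonneg)
  have Bad_iff: "(A, \<gamma>) \<in> Bad \<longleftrightarrow> 0 < Liminf (INF N::nat. principal {q :: int ^ 'n. N \<le> supnorm_int q}) (\<lambda>q. ereal (f q))"
    unfolding Bad_def f_def d_def n_def m_def by simp
  show ?thesis
  proof
    assume "C_A A \<gamma> \<noteq> {}"
    then obtain \<psi> where psi: "\<psi> \<in> C_class m n"
      and inf: "infinite {q :: int ^ 'n. d q < \<psi> (supnorm_int q)}"
      unfolding C_A_def d_def m_def n_def by blast
    have dec: "\<forall>a b. a \<le> b \<longrightarrow> \<psi> b \<le> \<psi> a" and nn: "\<forall>q. 0 \<le> \<psi> q"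
      and sm: "summable (\<lambda>k. real (Suc k) ^ (n - 1) * \<psi> (Suc k) ^ m)"
      using psi unfolding C_class_def by auto
    show "(A, \<gamma>) \<notin> Bad"
    proof
      assume "(A, \<gamma>) \<in> Bad"
      then have "0 < Liminf (INF N::nat. principal {q :: int ^ 'n. N \<le> supnorm_int q}) (\<lambda>q. ereal (f q))"
        using Bad_iff by simp
      then obtain e where e: "0 < ereal e" "ereal e < Liminf (INF N::nat. principal {q :: int ^ 'n. N \<le> supnorm_int q}) (\<lambda>q. ereal (f q))"
        using ereal_dense2 by blast
      have "ereal (e/2) < ereal e" using e by auto
      then have "eventually (\<lambda>q. ereal (e/2) < ereal (f q)) (INF N::nat. principal {q :: int ^ 'n. N \<le> supnorm_int q})"
        using e(2) le_Liminf_iff[THEN iffD1, OF less_imp_le[OF e(2)]] by blast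
      then obtain N where N: "\<And>q. N \<le> supnorm_int q \<Longrightarrow> e/2 < f q"
        unfolding eventually_F by auto
      have "e/2 > 0" using e by simp
      then obtain T where T: "\<And>t. t \<ge> T \<Longrightarrow> real t ^ n * \<psi> t ^ m < e/2"
        using tail_small[OF dec nn sm n1] by blast
      have "\<not> {q :: int ^ 'n. d q < \<psi> (supnorm_int q)} \<subseteq> {q. supnorm_int q \<le> max N T}"
        using inf finite_supnorm_le finite_subset by blast
      then obtain q where q: "d q < \<psi> (supnorm_int q)" "max N T < supnorm_int q" by force
      have "f q \<le> real (supnorm_int q) ^ n * \<psi> (supnorm_int q) ^ m"
        unfolding f_def using q d0 by (intro mult_left_mono power_mono) auto
      also have "\<dots> < e/2" using T q by simp
      moreover have "N \<le> supnorm_int q" using q by simp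
      ultimately show False using N[of q] by linarith
    qed
  next
    assume nb: "(A, \<gamma>) \<notin> Bad"
    have key: "\<exists>q. N \<le> supnorm_int q \<and> f q < e" if e: "e > 0" for e :: real and N
    proof (rule ccontr)
      assume "\<not> ?thesis"
      then have "eventually (\<lambda>q. ereal e \<le> ereal (f q)) (INF N::nat. principal {q :: int ^ 'n. N \<le> supnorm_int q})"
        unfolding eventually_F by (auto intro!: exI[of _ N])
      then have "ereal e \<le> Liminf (INF N::nat. principal {q :: int ^ 'n. N \<le> supnorm_int q}) (\<lambda>q. ereal (f q))"
        by (rule Liminf_bounded)
      moreover have "0 < ereal e" using e by simp
      ultimately show False using nb Bad_iff by (meson order_less_le_trans)
    qed
    define g where "g N e = (SOME q. N \<le> supnorm_int q \<and> f q < e)" for N e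
    have g: "N \<le> supnorm_int (g N e) \<and> f (g N e) < e" if "e > 0" for N e
      unfolding g_def using key[OF that, of N] by (rule someI_ex)
    define qs where "qs = rec_nat (g 1 1) (\<lambda>k q. g (Suc (supnorm_int q)) ((1/2::real) ^ Suc k))"
    have qs0: "qs 0 = g 1 1" and qsS: "qs (Suc k) = g (Suc (supnorm_int (qs k))) ((1/2::real) ^ Suc k)" for k
      unfolding qs_def by simp_all
    define Nk where "Nk k = supnorm_int (qs k)" for k
    have fq: "f (qs k) < (1/2) ^ k" for k
    proof (cases k)
      case 0 then show ?thesis using g[of 1 1] by (simp add: qs0)
    next
      case (Suc j)
      have "f (qs (Suc j)) < (1/2) ^ Suc j"
        unfolding qsS by (rule g[of "(1/2::real) ^ Suc j" "Suc (supnorm_int (qs j))", THEN conjunct2]) simp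
      then show ?thesis using Suc by simp
    qed
    have Nk0: "Nk 0 \<ge> 1" unfolding Nk_def qs0 using g[of 1 1] by simp
    have NkS: "Nk k < Nk (Suc k)" for k unfolding Nk_def qsS
      using g[of "(1/2::real) ^ Suc k" "Suc (supnorm_int (qs k))"] by (simp add: Suc_le_eq)
    have smN: "strict_mono Nk" using NkS by (simp add: strict_mono_Suc_iff)
    have Nkpos: "Nk k \<ge> 1" for k using Nk0 smN by (metis le_trans le0 strict_mono_less_eq)
    have Nkk: "k \<le> Nk k" for k using smN by (rule strict_mono_imp_increasing)
    define c where "c k = 2 * (1/2::real) ^ k / real (Nk k) ^ n" for k
    define kk where "kk t = (LEAST k. t \<le> Nk k)" for t
    have kk1: "t \<le> Nk (kk t)" for t unfolding kk_def by (rule LeastI[of _ t]) (rule Nkk)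
    have kk2: "t \<le> Nk j \<Longrightarrow> kk t \<le> j" for t j unfolding kk_def by (rule Least_le)
    have kk3: "j < kk t \<Longrightarrow> Nk j < t" for t j unfolding kk_def using not_less_Least by force
    have kkmono: "a \<le> b \<Longrightarrow> kk a \<le> kk b" for a b using kk1[of b] kk2[of a "kk b"] by simp
    have kkN: "kk (Nk k) = k" for k
      using kk2[of "Nk k" k] kk1[of "Nk k"] smN by (simp add: strict_mono_less_eq)
    have cpos: "c k > 0" for k unfolding c_def using Nkpos[of k] by simp
    have cdec: "j \<le> k \<Longrightarrow> c k \<le> c j" for j k
    proof -
      assume jk: "j \<le> k"
      have "(1/2::real) ^ k \<le> (1/2) ^ j" using jk by (intro power_decreasing) auto
      moreover have "real (Nk j) ^ n \<le> real (Nk k) ^ n" using jk smN by (intro power_mono) (auto simp: strict_mono_less_eq)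
      ultimately show "c k \<le> c j" unfolding c_def using Nkpos[of j]
        by (intro frac_le) auto
    qed
    have cN: "real (Nk k) * (real (Nk k) ^ (n - 1) * c k) = 2 * (1/2) ^ k" for k
    proof -
      have "real (Nk k) * real (Nk k) ^ (n - 1) = real (Nk k) ^ n" using n1
        by (cases n) auto
      then show ?thesis unfolding c_def using Nkpos[of k] by (simp add: mult.assoc[symmetric])
    qed
    define \<psi> where "\<psi> t = root m (c (kk t))" for t
    have psi_pow: "\<psi> t ^ m = c (kk t)" for t unfolding \<psi>_def using m1 cpos[of "kk t"] by simp
    have psi_nn: "0 \<le> \<psi> t" for t unfolding \<psi>_def using cpos[of "kk t"] by (simp add: real_root_ge_zero)
    have psi_dec: "\<forall>a b. a \<le> b \<longrightarrow> \<psi> b \<le> \<psi> a"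
      unfolding \<psi>_def using m1 cdec kkmono by (auto intro!: real_root_le_mono)
    define a where "a j = real (Suc j) ^ (n - 1) * \<psi> (Suc j) ^ m" for j
    have a_nn: "0 \<le> a j" for j unfolding a_def using psi_nn by simp
    have a_bd: "a j \<le> real (Nk K) ^ (n - 1) * c K" if "Suc j \<le> Nk K" "kk (Suc j) = K" for j K
      unfolding a_def psi_pow using that cpos[of K]
      by (simp add: mult_right_mono power_mono less_imp_le)
    have part: "(\<Sum>j<Nk K. a j) \<le> (\<Sum>k\<le>K. 2 * (1/2::real) ^ k)" for K
    proof (induction K)
      case 0
      have "(\<Sum>j<Nk 0. a j) \<le> real (card {..<Nk 0}) * (real (Nk 0) ^ (n - 1) * c 0)"
        by (rule sum_bounded_above, rule a_bd) (use kk2[of _ 0] in \<open>auto simp: Suc_le_eq\<close>)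
      then show ?case using cN[of 0] by simp
    next
      case (Suc K)
      have "(\<Sum>j<Nk (Suc K). a j) = (\<Sum>j\<in>{0..<Nk K}. a j) + (\<Sum>j\<in>{Nk K..<Nk (Suc K)}. a j)"
        using NkS[of K] by (simp add: sum.atLeastLessThan_concat atLeast0LessThan[symmetric])
      also have "(\<Sum>j\<in>{Nk K..<Nk (Suc K)}. a j) \<le> real (card {Nk K..<Nk (Suc K)}) * (real (Nk (Suc K)) ^ (n - 1) * c (Suc K))"
      proof (rule sum_bounded_above, rule a_bd)
        fix j assume j: "j \<in> {Nk K..<Nk (Suc K)}"
        then show "Suc j \<le> Nk (Suc K)" by simp
        have "kk (Suc j) \<le> Suc K" using j by (intro kk2) simp
        moreover have "\<not> kk (Suc j) \<le> K"
        proof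
          assume "kk (Suc j) \<le> K"
          then have "Nk (kk (Suc j)) \<le> Nk K" using smN by (simp add: strict_mono_less_eq)
          then show False using kk1[of "Suc j"] j by simp
        qed
        ultimately show "kk (Suc j) = Suc K" by simp
      qed
      also have "\<dots> \<le> real (Nk (Suc K)) * (real (Nk (Suc K)) ^ (n - 1) * c (Suc K))"
        using cpos[of "Suc K"] by (intro mult_right_mono) auto
      also have "\<dots> = 2 * (1/2) ^ Suc K" by (rule cN)
      finally show ?case using Suc.IH by (simp add: atLeast0LessThan)
    qed
    have geo: "(\<Sum>k\<le>K. 2 * (1/2::real) ^ k) = 4 - 2 * (1/2) ^ K" for K
      by (induction K) auto
    have summ: "summable a"
    proof (rule bounded_imp_summable[where B = 4])
      fix T
      have "(\<Sum>j\<le>T. a j) \<le> (\<Sum>j<Nk (Suc T). a j)"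
        using Nkk[of "Suc T"] a_nn by (intro sum_mono2) auto
      also have "\<dots> \<le> 4" using part[of "Suc T"] geo[of "Suc T"] zero_le_power[of "1/2::real" "Suc T"] by linarith
      finally show "(\<Sum>j\<le>T. a j) \<le> 4" .
    qed (rule a_nn)
    have inC: "\<psi> \<in> C_class m n"
      unfolding C_class_def using psi_dec psi_nn summ unfolding a_def by auto
    have mem: "d (qs k) < \<psi> (supnorm_int (qs k))" for k
    proof -
      have "real (Nk k) ^ n * d (qs k) ^ m < 2 * (1/2) ^ k"
        using fq[of k] zero_le_power[of "1/2::real" k] unfolding f_def Nk_def by linarith
      then have "d (qs k) ^ m < c k" unfolding c_def using Nkpos[of k]
        by (simp add: pos_less_divide_eq mult.commute)
      also have "\<dots> = \<psi> (Nk k) ^ m" using psi_pow kkN by simp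
      finally show ?thesis unfolding Nk_def using psi_nn by (rule power_less_imp_less_base)
    qed
    have "inj qs" using smN unfolding Nk_def inj_def by (metis strict_mono_eq)
    then have "infinite (range qs)" by (rule range_inj_infinite)
    then have "infinite {q :: int ^ 'n. d q < \<psi> (supnorm_int q)}"
      by (rule infinite_super[rotated]) (auto simp: mem)
    then have "\<psi> \<in> C_A A \<gamma>" using inC unfolding C_A_def d_def m_def n_def by simp
    then show "C_A A \<gamma> \<noteq> {}" by blast
  qed
qed

end
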